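(* Let $n\ge1$ and $\mathcal{K}=\{\texttt{a},\texttt{b}\}$ (so $k=2$). For the uniform prior $\pi$ on $\mathcal{K}^n$ and the single-target gain function $g_{\rm T}$, the posterior vulnerability of the shuffle channel is $$V_{\rm T}[\pi\triangleright\mathbf{S}]=\frac{1}{2^n}\sum_{i=0}^{n}\binom{n}{i}\frac{\max(i,n-i)}{n}.$$
   Context: A dataset is $x=(x_0,\dots,x_{n-1})\in\mathcal{K}^n$; its histogram $h(x)$ is the map $\kappa\mapsto|\{i:x_i=\kappa\}|$; $\#z$ is the number of datasets with histogram $z$. Shuffle channel $\mathbf{S}:\mathcal{K}^n\to\mathcal{K}^n$: $\mathbf{S}_{x,y}=1/\#h(x)$ if $h(y)=h(x)$, else $0$. Uniform prior: $\pi_x=1/2^n$. Single-target gain function: $\mathcal{W}=\mathcal{K}$, $g_{\rm T}(w,x)=1$ if $x_0=w$, else $0$. Posterior vulnerability: $V_{\rm T}[\pi\triangleright\mathbf{C}]=\sum_{y}\max_{w\in\mathcal{W}}\sum_{x}\pi_x\mathbf{C}_{x,y}g_{\rm T}(w,x)$. *)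

theory Defs
  imports Complex_Main
begin

datatype sym = Sa | Sb

definition datasets :: "nat \<Rightarrow> sym list set" where
  "datasets n = {xs. length xs = n}"

definition hist :: "sym list \<Rightarrow> sym \<Rightarrow> nat" where
  "hist xs = (\<lambda>k. count_list xs k)"

definition nhist :: "nat \<Rightarrow> (sym \<Rightarrow> nat) \<Rightarrow> nat" where
  "nhist n z = card {y \<in> datasets n. hist y = z}"

definition shuffle :: "nat \<Rightarrow> sym list \<Rightarrow> sym list \<Rightarrow> real" where
  "shuffle n x y = (if hist y = hist x then 1 / real (nhist n (hist x)) else 0)"

definition prior :: "nat \<Rightarrow> sym list \<Rightarrow> real" where
  "prior n x = 1 / 2 ^ n"

definition gT :: "sym \<Rightarrow> sym list \<Rightarrow> real" where
  "gT w x = (if x ! 0 = w then 1 else 0)"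

definition postV :: "nat \<Rightarrow> real" where
  "postV n = (\<Sum>y\<in>datasets n. Max ((\<lambda>w. \<Sum>x\<in>datasets n. prior n x * shuffle n x y * gT w x) ` UNIV))"

end

theory Submission
  imports Defs
begin

definition AA :: "nat \<Rightarrow> nat \<Rightarrow> sym list set" where
  "AA n i = {x. length x = n \<and> count_list x Sa = i}"

lemma univ_sym: "(UNIV :: sym set) = {Sa, Sb}"
  using sym.exhaust by auto

lemma cnt_sum: "count_list x Sa + count_list x Sb = length x"
proof (induction x)
  case (Cons a x) then show ?case by (cases a) auto
qed simp

lemma fin_ds: "finite (datasets n)"
proof -
  have "datasets n \<subseteq> {xs. set xs \<subseteq> {Sa,Sb} \<and> length xs = n}"
    unfolding datasets_def using univ_sym by auto
  moreover have "finite {xs. set xs \<subseteq> {Sa,Sb} \<and> length xs = n}"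
    by (rule finite_lists_length_eq) simp
  ultimately show ?thesis by (rule finite_subset)
qed

lemma fin_AA: "finite (AA n i)"
  using fin_ds[of n] unfolding AA_def datasets_def
  by (rule finite_subset[rotated]) auto

lemma AA_Suc: "AA (Suc n) i = Cons Sa ` {x \<in> AA n (i - 1). i > 0} \<union> Cons Sb ` AA n i"
proof
  show "AA (Suc n) i \<subseteq> Cons Sa ` {x \<in> AA n (i - 1). i > 0} \<union> Cons Sb ` AA n i"
  proof
    fix x assume "x \<in> AA (Suc n) i"
    then obtain a xs where x: "x = a # xs" "length xs = n" "count_list x Sa = i"
      unfolding AA_def by (cases x) auto
    show "x \<in> Cons Sa ` {x \<in> AA n (i - 1). i > 0} \<union> Cons Sb ` AA n i"
    proof (cases a)
      case Sa
      then have "xs \<in> {x \<in> AA n (i - 1). i > 0}" using x by (simp add: AA_def)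
      then show ?thesis using x Sa by blast
    next
      case Sb
      then have "xs \<in> AA n i" using x by (simp add: AA_def)
      then show ?thesis using x Sb by blast
    qed
  qed
  show "Cons Sa ` {x \<in> AA n (i - 1). i > 0} \<union> Cons Sb ` AA n i \<subseteq> AA (Suc n) i"
    by (auto simp: AA_def)
qed

lemma card_AA: "card (AA n i) = n choose i"
proof (induction n arbitrary: i)
  case 0
  have "AA 0 i = (if i = 0 then {[]} else {})" by (auto simp: AA_def)
  then show ?case by simp
next
  case (Suc n)
  have d: "Cons Sa ` {x \<in> AA n (i - 1). i > 0} \<inter> Cons Sb ` AA n i = {}" by blast
  have f1: "finite (Cons Sa ` {x \<in> AA n (i - 1). i > 0})"
    by (rule finite_imageI) (simp add: fin_AA)
  have f2: "finite (Cons Sb ` AA n i)"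
    by (rule finite_imageI) (rule fin_AA)
  have "card (AA (Suc n) i) = card (Cons Sa ` {x \<in> AA n (i - 1). i > 0}) + card (Cons Sb ` AA n i)"
    unfolding AA_Suc using card_Un_disjoint[OF f1 f2 d] .
  also have "\<dots> = card {x \<in> AA n (i - 1). i > 0} + card (AA n i)"
    by (simp add: card_image)
  also have "\<dots> = Suc n choose i"
  proof (cases i)
    case 0 then show ?thesis using Suc by simp
  next
    case (Suc j) then show ?thesis using Suc.IH by simp
  qed
  finally show ?case .
qed

lemma card_first_Sa: "card {x \<in> AA (Suc m) i. x ! 0 = Sa} = (if i = 0 then 0 else m choose (i - 1))"
proof -
  let ?S = "Cons Sa ` {x \<in> AA m (i - 1). i > 0}" and ?T = "Cons Sb ` AA m i"
  have "\<forall>x\<in>?S. x ! 0 = Sa" "\<forall>x\<in>?T. x ! 0 \<noteq> Sa" by auto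
  then have "{x \<in> ?S \<union> ?T. x ! 0 = Sa} = ?S" by blast
  then have e: "{x \<in> AA (Suc m) i. x ! 0 = Sa} = ?S" by (simp only: AA_Suc)
  show ?thesis unfolding e by (simp add: card_image card_AA)
qed

lemma card_first_Sb: "card {x \<in> AA (Suc m) i. x ! 0 = Sb} = m choose i"
proof -
  let ?S = "Cons Sa ` {x \<in> AA m (i - 1). i > 0}" and ?T = "Cons Sb ` AA m i"
  have "\<forall>x\<in>?S. x ! 0 \<noteq> Sb" "\<forall>x\<in>?T. x ! 0 = Sb" by auto
  then have "{x \<in> ?S \<union> ?T. x ! 0 = Sb} = ?T" by blast
  then have e: "{x \<in> AA (Suc m) i. x ! 0 = Sb} = ?T" by (simp only: AA_Suc)
  show ?thesis unfolding e by (simp add: card_image card_AA)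
qed

lemma hist_eq: "length x = n \<Longrightarrow> length y = n \<Longrightarrow> hist x = hist y \<longleftrightarrow> count_list x Sa = count_list y Sa"
proof
  assume "length x = n" "length y = n" "count_list x Sa = count_list y Sa"
  then have b: "count_list x Sb = count_list y Sb" using cnt_sum[of x] cnt_sum[of y] by simp
  show "hist x = hist y" unfolding hist_def
  proof
    fix k show "count_list x k = count_list y k"
      using b \<open>count_list x Sa = count_list y Sa\<close> by (cases k) simp_all
  qed
qed (simp add: hist_def)

lemma real_Sa: "real (if i = 0 then 0 else m choose (i - 1)) = real (Suc m choose i) * real i / real (Suc m)"
proof (cases i)
  case (Suc j)
  have "real (Suc j) * real (Suc m choose Suc j) = real (Suc m) * real (m choose j)"
    using Suc_times_binomial[of j m] by (metis of_nat_mult)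
  then show ?thesis using Suc by (simp add: field_simps)
qed simp

lemma real_Sb: "real (m choose i) = real (Suc m choose i) * real (Suc m - i) / real (Suc m)"
proof -
  have "real (Suc m - i) * real (Suc m choose i) = real (Suc m) * real (m choose i)"
    using binomial_absorb_comp[of "Suc m" i] by (metis of_nat_mult diff_Suc_1)
  then show ?thesis by (simp add: field_simps)
qed

lemma max_scale: "(c::real) \<ge> 0 \<Longrightarrow> N > 0 \<Longrightarrow> max (c * a / N) (c * b / N) = c * max a b / N"
proof (cases "a \<le> b")
  case True
  assume "c \<ge> 0" "N > 0"
  then have "c * a / N \<le> c * b / N" using True by (simp add: divide_right_mono mult_left_mono)
  then show ?thesis using True by simp
next
  case False
  assume "c \<ge> 0" "N > 0"
  then have "c * b / N \<le> c * a / N" using False by (simp add: divide_right_mono mult_left_mono)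
  then show ?thesis using False by simp
qed

lemma max_div: "(c::real) \<ge> 0 \<Longrightarrow> max (a / c) (b / c) = max a b / c"
proof (cases "a \<le> b")
  case True
  assume "c \<ge> 0"
  then have "a / c \<le> b / c" using True by (rule divide_right_mono[rotated])
  then show ?thesis using True by (simp add: max_def)
next
  case False
  assume "c \<ge> 0"
  then have "b / c \<le> a / c" using False by (intro divide_right_mono) auto
  then show ?thesis using False by (simp add: max_def)
qed

lemma inner_sum:
  assumes y: "y \<in> datasets n"
  shows "(\<Sum>x\<in>datasets n. prior n x * shuffle n x y * gT w x)
       = real (card {x \<in> AA n (count_list y Sa). x ! 0 = w}) * (1 / (2 ^ n * real (n choose count_list y Sa)))"
proof -
  let ?K = "1 / (2 ^ n * real (n choose count_list y Sa))"
  have nh: "nhist n (hist x) = n choose count_list x Sa" if "x \<in> datasets n" for x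
  proof -
    have "{y' \<in> datasets n. hist y' = hist x} = AA n (count_list x Sa)"
      using that hist_eq[of _ n x] by (auto simp: AA_def datasets_def)
    then show ?thesis unfolding nhist_def by (simp add: card_AA)
  qed
  have t: "prior n x * shuffle n x y * gT w x = (if x \<in> {x \<in> AA n (count_list y Sa). x ! 0 = w} then ?K else 0)"
    if x: "x \<in> datasets n" for x
  proof -
    have "hist y = hist x \<longleftrightarrow> count_list x Sa = count_list y Sa"
      using hist_eq[of y n x] x y by (auto simp: datasets_def)
    moreover have "x \<in> AA n (count_list y Sa) \<longleftrightarrow> count_list x Sa = count_list y Sa"
      using x by (auto simp: AA_def datasets_def)
    ultimately show ?thesis using nh[OF x]
      by (auto simp: prior_def shuffle_def gT_def)
  qed
  have sub: "{x \<in> AA n (count_list y Sa). x ! 0 = w} \<subseteq> datasets n"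
    by (auto simp: AA_def datasets_def)
  have "(\<Sum>x\<in>datasets n. prior n x * shuffle n x y * gT w x)
      = (\<Sum>x\<in>datasets n. (if x \<in> {x \<in> AA n (count_list y Sa). x ! 0 = w} then ?K else 0))"
    using t by (rule sum.cong[OF refl])
  also have "\<dots> = (\<Sum>x\<in>{x \<in> AA n (count_list y Sa). x ! 0 = w}. ?K)"
    using sum.If_cases[OF fin_ds, of "\<lambda>x. x \<in> {x \<in> AA n (count_list y Sa). x ! 0 = w}" "\<lambda>_. ?K" "\<lambda>_. 0" n]
      Int_absorb1[OF sub] by (simp add: Int_commute)
  also have "\<dots> = real (card {x \<in> AA n (count_list y Sa). x ! 0 = w}) * ?K" by simp
  finally show ?thesis .
qed

theorem mainTheorem9:
  fixes n :: nat
  assumes "n \<ge> 1"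
  shows "postV n = (1 / 2 ^ n) * (\<Sum>i=0..n. real (n choose i) * real (max i (n - i)) / real n)"
proof -
  obtain m where m: "n = Suc m" using assms by (cases n) auto
  define F where "F i = max (real (card {x \<in> AA n i. x ! 0 = Sa})) (real (card {x \<in> AA n i. x ! 0 = Sb}))
     * (1 / (2 ^ n * real (n choose i)))" for i
  have step1: "Max ((\<lambda>w. \<Sum>x\<in>datasets n. prior n x * shuffle n x y * gT w x) ` UNIV) = F (count_list y Sa)"
    if y: "y \<in> datasets n" for y
  proof -
    have K: "1 / (2 ^ n * real (n choose count_list y Sa)) \<ge> 0" by simp
    show ?thesis unfolding univ_sym F_def using inner_sum[OF y] K
      by (simp add: max_div)
  qed
  have cle: "count_list y Sa \<in> {0..n}" if "y \<in> datasets n" for y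
    using that count_le_length[of y Sa] by (simp add: datasets_def)
  have "postV n = (\<Sum>y\<in>datasets n. F (count_list y Sa))"
    unfolding postV_def using step1 by (rule sum.cong[OF refl])
  also have "\<dots> = (\<Sum>i\<in>{0..n}. \<Sum>y\<in>{y \<in> datasets n. count_list y Sa = i}. F (count_list y Sa))"
    by (rule sum.group[symmetric]) (use fin_ds cle in auto)
  also have "\<dots> = (\<Sum>i\<in>{0..n}. real (n choose i) * F i)"
  proof (rule sum.cong[OF refl])
    fix i assume "i \<in> {0..n}"
    have "{y \<in> datasets n. count_list y Sa = i} = AA n i" by (auto simp: AA_def datasets_def)
    moreover have "(\<Sum>y\<in>AA n i. F (count_list y Sa)) = (\<Sum>y\<in>AA n i. F i)"
    proof (rule sum.cong[OF refl])
      fix y assume "y \<in> AA n i"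
      then have "count_list y Sa = i" unfolding AA_def by simp
      then show "F (count_list y Sa) = F i" by simp
    qed
    ultimately show "(\<Sum>y\<in>{y \<in> datasets n. count_list y Sa = i}. F (count_list y Sa)) = real (n choose i) * F i"
      by (simp only: sum_constant card_AA)
  qed
  also have "\<dots> = (\<Sum>i\<in>{0..n}. (1 / 2 ^ n) * (real (n choose i) * real (max i (n - i)) / real n))"
  proof (rule sum.cong[OF refl])
    fix i assume i: "i \<in> {0..n}"
    have pos: "real (n choose i) > 0" using i by simp
    have "max (real (card {x \<in> AA n i. x ! 0 = Sa})) (real (card {x \<in> AA n i. x ! 0 = Sb}))
        = real (n choose i) * real (max i (n - i)) / real n"
    proof -
      have "max (real (card {x \<in> AA n i. x ! 0 = Sa})) (real (card {x \<in> AA n i. x ! 0 = Sb}))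
          = max (real (Suc m choose i) * real i / real (Suc m)) (real (Suc m choose i) * real (Suc m - i) / real (Suc m))"
        unfolding m card_first_Sa card_first_Sb using real_Sa[of i m] real_Sb[of m i] by simp
      also have "\<dots> = real (Suc m choose i) * max (real i) (real (Suc m - i)) / real (Suc m)"
        by (rule max_scale) auto
      finally show ?thesis unfolding m of_nat_max .
    qed
    then show "real (n choose i) * F i = (1 / 2 ^ n) * (real (n choose i) * real (max i (n - i)) / real n)"
      unfolding F_def using pos by (simp add: field_simps)
  qed
  also have "\<dots> = (1 / 2 ^ n) * (\<Sum>i=0..n. real (n choose i) * real (max i (n - i)) / real n)"
    by (simp add: sum_distrib_left)
  finally show ?thesis .
qed

end
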